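(* Let $G$ be a finite group and $p$ a prime such that $G$ has no redundant Sylow $p$-subgroup. Then $|G_p|\geq \nu_p(G)$.
   Context: For a finite group $G$ and a prime $p$, $G_p$ denotes the set of $p$-elements of $G$, $\mathrm{Syl}_p(G)$ the set of Sylow $p$-subgroups of $G$, and $\nu_p(G)=|\mathrm{Syl}_p(G)|$. $G$ is said to have a redundant Sylow $p$-subgroup if $G_p$ is contained in the union of the members of some proper subset of $\mathrm{Syl}_p(G)$. *)

theory Defs
  imports "HOL-Algebra.Algebra"
begin

definition p_elements :: "('a, 'b) monoid_scheme \<Rightarrow> nat \<Rightarrow> 'a set" where
  "p_elements G p = {x \<in> carrier G. \<exists>k::nat. group.ord G x = p ^ k}"

definition Syl :: "('a, 'b) monoid_scheme \<Rightarrow> nat \<Rightarrow> 'a set set" where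
  "Syl G p = {P. subgroup P G \<and> card P = p ^ multiplicity p (order G)}"

definition nu :: "('a, 'b) monoid_scheme \<Rightarrow> nat \<Rightarrow> nat" where
  "nu G p = card (Syl G p)"

definition has_redundant_Sylow :: "('a, 'b) monoid_scheme \<Rightarrow> nat \<Rightarrow> bool" where
  "has_redundant_Sylow G p \<longleftrightarrow> (\<exists>S. S \<subset> Syl G p \<and> p_elements G p \<subseteq> \<Union>S)"

end

theory Submission
  imports Defs
begin

lemma funpow_mult_fix:
  assumes "(f ^^ d) y = y"
  shows "(f ^^ (d * q)) y = y"
proof (induction q)
  case 0 then show ?case by simp
next
  case (Suc q)
  have "(f ^^ (d * Suc q)) y = (f ^^ (d * q + d)) y" by (simp add: add.commute)
  also have "\<dots> = (f ^^ (d * q)) ((f ^^ d) y)"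
    by (simp only: funpow_add comp_apply)
  finally have "(f ^^ (d * Suc q)) y = (f ^^ (d * q)) ((f ^^ d) y)" .
  then show ?case using Suc assms by simp
qed

lemma funpow_mod_fix:
  assumes "(f ^^ d) y = y"
  shows "(f ^^ m) y = (f ^^ (m mod d)) y"
proof -
  have "m = m mod d + d * (m div d)" by simp
  then have "(f ^^ m) y = (f ^^ (m mod d)) ((f ^^ (d * (m div d))) y)"
    by (metis comp_apply funpow_add)
  then show ?thesis using funpow_mult_fix[OF assms] by simp
qed

lemma fixpt_lemma:
  fixes f :: "'c \<Rightarrow> 'c" and p :: nat
  assumes "finite A" "\<forall>y\<in>A. f y \<in> A" "\<forall>y\<in>A. (f ^^ (p ^ k)) y = y" "Factorial_Ring.prime p"
    "card A mod p \<noteq> 0"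
  shows "\<exists>y\<in>A. f y = y"
  using assms
proof (induction "card A" arbitrary: A rule: less_induct)
  case less
  let ?n = "p ^ k"
  have np: "?n > 0" using less.prems(4) by (simp add: prime_gt_0_nat)
  have "A \<noteq> {}" using less.prems(5) by auto
  then obtain y where y: "y \<in> A" by blast
  have fpX: "(f ^^ i) y \<in> A" for i
    by (induction i) (use y less.prems(2) in auto)
  define d where "d = (LEAST d. 0 < d \<and> (f ^^ d) y = y)"
  have ex: "0 < ?n \<and> (f ^^ ?n) y = y" using np y less.prems(3) by auto
  have d1: "0 < d \<and> (f ^^ d) y = y"
    unfolding d_def by (rule LeastI[of _ ?n]) (rule ex)
  have d2: "\<And>e. 0 < e \<Longrightarrow> e < d \<Longrightarrow> (f ^^ e) y \<noteq> y"
    unfolding d_def using not_less_Least by blast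
  have per: "(f ^^ m) y = (f ^^ (m mod d)) y" for m
    using funpow_mod_fix[where f=f and d=d and y=y] d1 by blast
  have "?n mod d = 0"
  proof -
    have "(f ^^ (?n mod d)) y = y" using per[of ?n] ex by simp
    moreover have "?n mod d < d" using d1 by simp
    ultimately have "?n mod d = 0" using d2 by (meson neq0_conv)
    then show ?thesis by auto
  qed
  then obtain j where dj: "d = p ^ j"
  proof -
    have "d dvd ?n" using \<open>?n mod d = 0\<close> by (simp add: mod_0_imp_dvd)
    then show ?thesis using divides_primepow_nat[OF less.prems(4)] that by blast
  qed
  show ?case
  proof (cases "j = 0")
    case True
    then have "d = 1" using dj by simp
    then show ?thesis using d1 y by auto
  next
    case False
    then have pd: "d mod p = 0" using dj False by (cases j) auto
    define Orb where "Orb = (\<lambda>i. (f ^^ i) y) ` {..<d}"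
    have OrbX: "Orb \<subseteq> A" unfolding Orb_def using fpX by auto
    have injOrb: "inj_on (\<lambda>i. (f ^^ i) y) {..<d}"
    proof (rule inj_onI)
      fix i j assume ij: "i \<in> {..<d}" "j \<in> {..<d}" "(f ^^ i) y = (f ^^ j) y"
      show "i = j"
      proof (rule ccontr)
        assume "i \<noteq> j"
        then consider "i < j" | "j < i" by linarith
        then show False
        proof cases
          case 1
          have "(f ^^ (d - j + i)) y = (f ^^ (d - j)) ((f ^^ i) y)"
            by (simp add: funpow_add)
          also have "\<dots> = (f ^^ (d - j)) ((f ^^ j) y)" using ij by simp
          also have "\<dots> = (f ^^ (d - j + j)) y" by (simp only: funpow_add comp_apply)
          also have "\<dots> = (f ^^ d) y" using ij(2) by simp
          finally have E1: "(f ^^ (d - j + i)) y = y" using d1 by simp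
          have E2: "d - j + i < d" "0 < d - j + i" using 1 ij by auto
          from d2[OF E2(2) E2(1)] E1 show False by contradiction
        next
          case 2
          have "(f ^^ (d - i + j)) y = (f ^^ (d - i)) ((f ^^ j) y)"
            by (simp add: funpow_add)
          also have "\<dots> = (f ^^ (d - i)) ((f ^^ i) y)" using ij by simp
          also have "\<dots> = (f ^^ (d - i + i)) y" by (simp only: funpow_add comp_apply)
          also have "\<dots> = (f ^^ d) y" using ij(1) by simp
          finally have E1: "(f ^^ (d - i + j)) y = y" using d1 by simp
          have E2: "d - i + j < d" "0 < d - i + j" using 2 ij by auto
          from d2[OF E2(2) E2(1)] E1 show False by contradiction
        qed
      qed
    qed
    have cardOrb: "card Orb = d" unfolding Orb_def using injOrb by (simp add: card_image)
    define B where "B = A - Orb"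
    have finX': "finite B" using less.prems(1) B_def by simp
    have cX: "card A = card B + d"
    proof -
      have fo: "finite Orb" using OrbX less.prems(1) finite_subset by blast
      have "card B = card A - card Orb" unfolding B_def using card_Diff_subset[OF fo OrbX] .
      moreover have "card Orb \<le> card A" using card_mono[OF less.prems(1) OrbX] .
      ultimately show ?thesis using cardOrb by simp
    qed
    have lt: "card B < card A" using cX d1 by simp
    have inv: "\<forall>z\<in>B. f z \<in> B"
    proof
      fix z assume z: "z \<in> B"
      then have zX: "z \<in> A" unfolding B_def by simp
      have fzX: "f z \<in> A" using zX less.prems(2) by simp
      show "f z \<in> B"
      proof (rule ccontr)
        assume "f z \<notin> B"
        then have "f z \<in> Orb" using fzX B_def by simp
        then obtain i where i: "f z = (f ^^ i) y" unfolding Orb_def by auto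
        have "z = (f ^^ ?n) z" using zX less.prems(3) by simp
        also have "\<dots> = (f ^^ (?n - 1)) (f z)"
        proof -
          have "?n = Suc (?n - 1)" using np by simp
          then have "(f ^^ ?n) z = (f ^^ Suc (?n - 1)) z" by (rule arg_cong)
          then show ?thesis by (simp only: funpow_Suc_right comp_apply)
        qed
        also have "\<dots> = (f ^^ (?n - 1 + i)) y" using i by (simp add: funpow_add)
        also have "\<dots> = (f ^^ ((?n - 1 + i) mod d)) y" using per by blast
        finally have "z \<in> Orb" unfolding Orb_def using d1 by auto
        then show False using z B_def by simp
      qed
    qed
    have "card B mod p \<noteq> 0"
      proof -
      have "card A mod p = (card B + d mod p) mod p" using cX by (simp add: mod_add_right_eq)
      then show ?thesis using pd less.prems(5) by simp
    qed
    moreover have "\<forall>y\<in>B. (f ^^ ?n) y = y" using less.prems(3) B_def by simp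
    ultimately obtain z where "z \<in> B" "f z = z"
      using less.hyps[OF lt finX' inv] less.prems(4) by blast
    then show ?thesis using B_def by auto
  qed
qed


lemma (in group) rcos_pow:
  assumes "C \<subseteq> carrier G" "x \<in> carrier G"
  shows "((\<lambda>C. C #> x) ^^ n) C = C #> (x [^] n)"
proof (induction n)
  case 0 then show ?case using assms by simp
next
  case (Suc n)
  have "((\<lambda>C. C #> x) ^^ Suc n) C = (C #> (x [^] n)) #> x" using Suc by simp
  also have "\<dots> = C #> (x [^] n \<otimes> x)" using assms by (simp add: coset_mult_assoc)
  also have "\<dots> = C #> (x [^] Suc n)" by simp
  finally show ?case .
qed

lemma (in group) pelem_in_sylow:
  assumes fin: "finite (carrier G)" and pp: "Factorial_Ring.prime p"
    and x: "x \<in> carrier G" and ox: "ord x = p ^ k"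
  shows "\<exists>Q. subgroup Q G \<and> card Q = p ^ multiplicity p (order G) \<and> x \<in> Q"
proof -
  define a where "a = multiplicity p (order G)"
  define m where "m = order G div p ^ a"
  have oG: "order G > 0" using fin by (simp add: order_gt_0_iff_finite)
  have dv: "p ^ a dvd order G" unfolding a_def by (rule multiplicity_dvd)
  have om: "order G = p ^ a * m" unfolding m_def using dv by simp
  have ndv: "\<not> p dvd m"
  proof
    assume "p dvd m"
    then have "p ^ Suc a dvd order G" using om by simp
    then have "Suc a \<le> multiplicity p (order G)"
      using oG pp by (metis multiplicity_geI not_prime_unit order_less_irrefl prime_imp_prime_elem)
    then show False unfolding a_def by simp
  qed
  have syl: "sylow G p a m"
    by (rule sylow.intro[OF is_group]) (unfold_locales, auto simp: pp om fin)
  obtain P where P: "subgroup P G" "card P = p ^ a"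
    using sylow.sylow_thm[OF syl] by blast
  have PG: "P \<subseteq> carrier G" using P(1) subgroup.subset by blast
  have lag: "card (rcosets P) * card P = order G" using lagrange[OF P(1)] .
  have pa0: "p ^ a > 0" using pp prime_gt_0_nat by simp
  have "card (rcosets P) * p ^ a = m * p ^ a" using lag om P(2) by (simp add: mult.commute)
  then have cR: "card (rcosets P) = m" using pa0 by (metis mult_right_cancel neq0_conv)
  have finR: "finite (rcosets P)"
    using fin rcosets_subset_PowG[OF P(1)] by (meson finite_Pow_iff finite_subset)
  define f where "f = (\<lambda>C. C #> x)"
  have fin_into: "\<forall>C\<in>rcosets P. f C \<in> rcosets P"
  proof
    fix C assume "C \<in> rcosets P"
    then obtain g where g: "g \<in> carrier G" "C = P #> g" unfolding RCOSETS_def by blast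
    have "f C = P #> (g \<otimes> x)" unfolding f_def g(2) using PG g x by (simp add: coset_mult_assoc)
    then show "f C \<in> rcosets P" using PG g x by (simp add: rcosetsI)
  qed
  have per: "\<forall>C\<in>rcosets P. (f ^^ (p ^ k)) C = C"
  proof
    fix C assume C: "C \<in> rcosets P"
    then have CG: "C \<subseteq> carrier G" using rcosets_subset_PowG[OF P(1)] by blast
    have "(f ^^ (p ^ k)) C = C #> (x [^] (p ^ k))" unfolding f_def using rcos_pow[OF CG x] .
    also have "x [^] (p ^ k) = \<one>" using ox x by (metis pow_ord_eq_1)
    finally show "(f ^^ (p ^ k)) C = C" using CG by simp
  qed
  have "card (rcosets P) mod p \<noteq> 0" using cR ndv by (simp add: dvd_eq_mod_eq_0)
  then obtain C where C: "C \<in> rcosets P" "f C = C"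
    using fixpt_lemma[OF finR fin_into per pp] by blast
  then obtain g where g: "g \<in> carrier G" "C = P #> g" unfolding RCOSETS_def by blast
  have "P #> (g \<otimes> x) = P #> g" using C g PG x unfolding f_def by (simp add: coset_mult_assoc)
  then have "g \<otimes> x \<in> P #> g" using rcos_self[OF _ P(1), of "g \<otimes> x"] g x by simp
  then have h: "(g \<otimes> x) \<otimes> inv g \<in> P"
    using subgroup.rcos_module_imp[OF P(1) is_group g(1)] by blast
  define Q where "Q = inv g <# P #> g"
  have sQ: "subgroup Q G" unfolding Q_def using subgroup_conjugation_is_surj1[OF g(1) P(1)] .
  have "inv g \<otimes> ((g \<otimes> x) \<otimes> inv g) \<otimes> g \<in> Q"
    unfolding Q_def l_coset_def r_coset_def using h by blast
  moreover have "inv g \<otimes> ((g \<otimes> x) \<otimes> inv g) \<otimes> g = x"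
    using g x by (simp add: m_assoc flip: m_assoc[of "inv g" g x])
  ultimately have xQ: "x \<in> Q" by simp
  have "card (inv g <# P) = card P"
  proof -
    have "inv g <# P \<in> lcosets P" unfolding LCOSETS_def using g by blast
    then show ?thesis using l_card_cosets_equal PG fin by metis
  qed
  moreover have "card (inv g <# P #> g) = card (inv g <# P)"
    using card_rcosets_equal[of "inv g <# P #> g" "inv g <# P"] g PG
    by (metis inv_closed l_coset_subset_G rcosetsI)
  ultimately have "card Q = p ^ a" unfolding Q_def using P(2) by simp
  then show ?thesis using sQ xQ a_def by blast
qed

theorem corollary2p7:
  fixes G :: "('a, 'b) monoid_scheme" and p :: nat
  assumes "group G" and "finite (carrier G)" and "Factorial_Ring.prime p"
    and "\<not> has_redundant_Sylow G p"
  shows "card (p_elements G p) \<ge> nu G p"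
proof -
  interpret group G by fact
  define S where "S = Syl G p"
  have finS: "finite S"
  proof -
    have "S \<subseteq> Pow (carrier G)" unfolding S_def Syl_def using subgroup.subset by blast
    then show ?thesis using assms(2) finite_subset by blast
  qed
  have finE: "finite (p_elements G p)" using assms(2) unfolding p_elements_def by simp
  have ex: "\<exists>x. x \<in> p_elements G p \<and> x \<notin> \<Union>(S - {P})" if PS: "P \<in> S" for P
  proof -
    have "S - {P} \<subset> S" using PS by blast
    then have "\<not> p_elements G p \<subseteq> \<Union>(S - {P})"
      using assms(4) unfolding has_redundant_Sylow_def S_def by blast
    then show ?thesis by blast
  qed
  define c where "c = (\<lambda>P. SOME x. x \<in> p_elements G p \<and> x \<notin> \<Union>(S - {P}))"
  have c: "c P \<in> p_elements G p \<and> c P \<notin> \<Union>(S - {P})" if "P \<in> S" for P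
    unfolding c_def using someI_ex[OF ex[OF that]] .
  have cin: "c P \<in> P" if PS: "P \<in> S" for P
  proof -
    have "c P \<in> carrier G" "\<exists>k::nat. ord (c P) = p ^ k"
      using c[OF PS] unfolding p_elements_def by auto
    then obtain Q where "subgroup Q G" "card Q = p ^ multiplicity p (order G)" "c P \<in> Q"
      using pelem_in_sylow[OF assms(2) assms(3)] by blast
    then have "Q \<in> S" "c P \<in> Q" unfolding S_def Syl_def by auto
    then show ?thesis using c[OF PS] by blast
  qed
  have inj: "inj_on c S"
  proof (rule inj_onI)
    fix P Q assume PQ: "P \<in> S" "Q \<in> S" "c P = c Q"
    show "P = Q"
    proof (rule ccontr)
      assume "P \<noteq> Q"
      then have "Q \<in> S - {P}" using PQ by blast
      moreover have "c P \<in> Q" using cin[OF PQ(2)] PQ(3) by simp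
      ultimately show False using c[OF PQ(1)] by blast
    qed
  qed
  have "c ` S \<subseteq> p_elements G p" using c by blast
  then have "card S \<le> card (p_elements G p)"
    using card_inj_on_le[OF inj _ finE] by blast
  then show ?thesis unfolding nu_def S_def .
qed

end
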